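(* Assume $n\geq 10^6$, let $t$ be a node of maximum popularity (so $\mu_t\ge\mu_k$ for all nodes $k$), and assume $\xi_t\geq 8200\ln n$. Let $\ell\in\{0,1,2\}$, and let $h$ be an integer and $k$ a node such that $h\in Z_t$ and $h-2\in Z_k$. Then $$\Pr[d_k(\mathbf{x})=h-\ell]\;\leq\;264\,e\sqrt{\frac{\ln n}{\xi_t}}\cdot\Pr[d_k(\mathbf{x})>h].$$
   Context: Setting: a priori popularity model on $n+1$ agents, where each directed edge $(i,j)$, $i\ne j$, is present independently with probability $p_j$, so the in-degree $d_k(\mathbf{x})\sim\mathrm{Bin}(n,p_k)$. Let $\mu_k=p_kn$ and $\xi_k=\min\{\mu_k,n-\mu_k\}$. The comfort zone of node $k$ is $Z_k=\{L_k,\dots,U_k\}$, where $L_k$ is the highest integer $c$ with $\Pr[d_k(\mathbf{x})<c]\leq n^{-5.33}$ (or $0$ if none exists) and $U_k$ is the lowest integer $c$ with $\Pr[d_k(\mathbf{x})>c]\leq n^{-5.33}$ (or $n$ if none exists). *)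

theory Defs
  imports "HOL-Probability.Probability"
begin

text \<open>In-degree of a node with popularity q in the a priori popularity model on n+1 agents:
  d ~ Bin(n, q), modelled by the library's binomial_pmf.\<close>

definition lowTail :: "nat \<Rightarrow> real \<Rightarrow> int \<Rightarrow> real" where
  "lowTail n q c = measure_pmf.prob (binomial_pmf n q) {i. int i < c}"

definition highTail :: "nat \<Rightarrow> real \<Rightarrow> int \<Rightarrow> real" where
  "highTail n q c = measure_pmf.prob (binomial_pmf n q) {i. int i > c}"

definition compL :: "nat \<Rightarrow> real \<Rightarrow> int" where
  "compL n q = (if \<exists>c::int. lowTail n q c \<le> real n powr (-(533/100))
               then (GREATEST c::int. lowTail n q c \<le> real n powr (-(533/100))) else 0)"

definition compU :: "nat \<Rightarrow> real \<Rightarrow> int" where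
  "compU n q = (if \<exists>c::int. highTail n q c \<le> real n powr (-(533/100))
               then (LEAST c::int. highTail n q c \<le> real n powr (-(533/100))) else int n)"

definition comfortZone :: "nat \<Rightarrow> real \<Rightarrow> int set" where
  "comfortZone n q = {compL n q .. compU n q}"

definition xi :: "nat \<Rightarrow> real \<Rightarrow> real" where
  "xi n q = min (q * real n) (real n - q * real n)"

end

theory Submission
  imports Defs
begin


lemma binom_prob_sum:
  assumes "0 \<le> q" "q \<le> 1"
  shows "measure_pmf.prob (binomial_pmf n q) B = (\<Sum>k\<in>B \<inter> {..n}. pmf (binomial_pmf n q) k)"
proof -
  have s: "set_pmf (binomial_pmf n q) \<subseteq> {..n}"
    using assms by (auto simp: set_pmf_binomial_eq)
  have "measure_pmf.prob (binomial_pmf n q) B = measure_pmf.prob (binomial_pmf n q) (B \<inter> set_pmf (binomial_pmf n q))"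
    by (simp add: measure_Int_set_pmf)
  also have "B \<inter> set_pmf (binomial_pmf n q) = (B \<inter> {..n}) \<inter> set_pmf (binomial_pmf n q)" using s by auto
  also have "measure_pmf.prob (binomial_pmf n q) \<dots> = measure_pmf.prob (binomial_pmf n q) (B \<inter> {..n})"
    by (simp add: measure_Int_set_pmf)
  also have "\<dots> = (\<Sum>k\<in>B \<inter> {..n}. pmf (binomial_pmf n q) k)"
    by (rule measure_measure_pmf_finite) simp
  finally show ?thesis .
qed

lemma binom_mgf:
  assumes "0 \<le> q" "q \<le> 1"
  shows "(\<Sum>k\<le>n. pmf (binomial_pmf n q) k * exp (lam * real k)) = (1 - q + q * exp lam) ^ n"
proof -
  have "(q * exp lam + (1 - q)) ^ n = (\<Sum>k\<le>n. real (n choose k) * (q * exp lam) ^ k * (1 - q) ^ (n - k))"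
    by (subst binomial_ring) (simp add: atLeast0AtMost)
  also have "\<dots> = (\<Sum>k\<le>n. pmf (binomial_pmf n q) k * exp (lam * real k))"
    using assms by (intro sum.cong refl) (simp add: exp_of_nat_mult[symmetric] power_mult_distrib mult.commute mult.left_commute)
  finally show ?thesis by (simp add: add.commute)
qed



lemma mgf_factor_bound:
  fixes q lam :: real
  assumes q: "0 \<le> q" "q \<le> 1" and lam: "-1 \<le> lam" "lam \<le> 1"
  shows "1 - q + q * exp lam \<le> exp (q * lam + 2 * q * (1 - q) * lam^2)"
proof -
  define D where "D = (\<lambda>x::real. 1 - q + q * exp x)"
  have Dpos: "D x > 0" for x
  proof (cases "q = 1")
    case True then show ?thesis by (simp add: D_def)
  next
    case False then have "1 - q > 0" using q by simp
    moreover have "q * exp x \<ge> 0" using q by simp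
    ultimately show ?thesis by (simp add: D_def)
  qed
  define g where "g = (\<lambda>x. q * x + 2 * q * (1 - q) * x^2 - ln (D x))"
  define g' where "g' = (\<lambda>x. q + 4 * q * (1 - q) * x - q * exp x / D x)"
  have der: "(g has_real_derivative g' x) (at x)" for x
    unfolding g_def g'_def D_def
    using Dpos[of x] unfolding D_def
    by (auto intro!: derivative_eq_intros simp: power2_eq_square field_simps)
  have key: "g' x = q * (1 - q) * (4 * x * D x - (exp x - 1)) / D x" for x
    using Dpos[of x] unfolding g'_def by (simp add: D_def field_simps)
  have g0: "g 0 = 0" by (simp add: g_def D_def)
  have "g lam \<ge> 0"
  proof (cases "lam \<ge> 0")
    case True
    have "g 0 \<le> g lam"
    proof (rule deriv_nonneg_imp_mono[OF der])
      fix x assume x: "x \<in> {0..lam}"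
      have "q * 1 \<le> q * exp x" using x q by (intro mult_left_mono) auto
      then have D1: "D x \<ge> 1" by (simp add: D_def)
      have "exp x \<le> 1 + x + x^2" using x lam by (intro exp_bound) auto
      moreover have "x^2 \<le> x" using x lam by (simp add: power2_eq_square mult_le_cancel_left1 mult_left_le)
      moreover have "x * 1 \<le> x * D x" using D1 x by (intro mult_left_mono) auto
      ultimately have "exp x - 1 \<le> 4 * x * D x" using x by auto
      then show "0 \<le> g' x" unfolding key using q Dpos[of x]
        by (intro divide_nonneg_pos mult_nonneg_nonneg) auto
    qed (use True in auto)
    then show ?thesis using g0 by simp
  next
    case False
    have "g 0 \<le> g lam"
    proof (rule deriv_nonpos_imp_antimono[OF der])
      fix x assume x: "x \<in> {lam..0}"
      have "exp x \<ge> exp (-1)" using x lam by auto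
      moreover have "exp (-1::real) \<ge> 1/3"
      proof -
        have "exp (1::real) \<le> 3" using exp_le by simp
        then show ?thesis by (simp add: exp_minus field_simps)
      qed
      moreover have "D x \<ge> exp x"
      proof -
        have "exp x \<le> 1" using x by auto
        then have "0 \<le> (1 - q) * (1 - exp x)" using q by (intro mult_nonneg_nonneg) auto
        then show ?thesis by (simp add: D_def algebra_simps)
      qed
      ultimately have D3: "D x \<ge> 1/3" by linarith
      have "1 + x \<le> exp x" by simp
      moreover have "x * D x \<le> x * (1/3)" using D3 x by (intro mult_left_mono_neg) auto
      ultimately have "4 * x * D x - (exp x - 1) \<le> 0" using x by (simp only: atLeastAtMost_iff) linarith
      then show "g' x \<le> 0" unfolding key using q Dpos[of x]
        by (intro divide_nonpos_pos mult_nonneg_nonpos) auto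
    qed (use False in auto)
    then show ?thesis using g0 by simp
  qed
  then have "ln (D lam) \<le> q * lam + 2 * q * (1 - q) * lam^2" unfolding g_def by simp
  then have "exp (ln (D lam)) \<le> exp (q * lam + 2 * q * (1 - q) * lam^2)" by (simp only: exp_le_cancel_iff)
  then show ?thesis using Dpos[of lam] by (simp only: exp_ln D_def)
qed



lemma upper_tail:
  fixes q lam a :: real
  assumes q: "0 \<le> q" "q \<le> 1" and lam: "0 \<le> lam" "lam \<le> 1"
  shows "measure_pmf.prob (binomial_pmf n q) {i. a \<le> real i}
     \<le> exp (- lam * a + lam * n * q + 2 * real n * q * (1 - q) * lam^2)"
proof -
  let ?p = "pmf (binomial_pmf n q)"
  have "measure_pmf.prob (binomial_pmf n q) {i. a \<le> real i} = (\<Sum>k\<in>{i. a \<le> real i} \<inter> {..n}. ?p k)"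
    using q by (rule binom_prob_sum)
  also have "\<dots> \<le> (\<Sum>k\<in>{i. a \<le> real i} \<inter> {..n}. ?p k * exp (lam * (real k - a)))"
  proof (rule sum_mono)
    fix k assume "k \<in> {i. a \<le> real i} \<inter> {..n}"
    then have "exp (lam * (real k - a)) \<ge> 1" using lam by auto
    then show "?p k \<le> ?p k * exp (lam * (real k - a))"
      using mult_left_mono[of 1 "exp (lam * (real k - a))" "?p k"] by simp
  qed
  also have "\<dots> \<le> (\<Sum>k\<le>n. ?p k * exp (lam * (real k - a)))"
    by (rule sum_mono2) auto
  also have "\<dots> = exp (- lam * a) * (\<Sum>k\<le>n. ?p k * exp (lam * real k))"
    by (simp add: sum_distrib_left algebra_simps exp_diff exp_minus field_simps)
  also have "\<dots> = exp (- lam * a) * (1 - q + q * exp lam) ^ n"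
    by (subst binom_mgf[OF q]) (rule refl)
  also have "\<dots> \<le> exp (- lam * a) * exp (q * lam + 2 * q * (1 - q) * lam^2) ^ n"
    using q lam by (intro mult_left_mono power_mono mgf_factor_bound) (auto intro: add_nonneg_nonneg)
  also have "\<dots> = exp (- lam * a + lam * n * q + 2 * real n * q * (1 - q) * lam^2)"
    by (simp add: exp_of_nat_mult[symmetric] exp_add[symmetric] algebra_simps)
  finally show ?thesis .
qed

lemma lower_tail:
  fixes q lam a :: real
  assumes q: "0 \<le> q" "q \<le> 1" and lam: "0 \<le> lam" "lam \<le> 1"
  shows "measure_pmf.prob (binomial_pmf n q) {i. real i \<le> a}
     \<le> exp (lam * a - lam * n * q + 2 * real n * q * (1 - q) * lam^2)"
proof -
  let ?p = "pmf (binomial_pmf n q)"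
  have "measure_pmf.prob (binomial_pmf n q) {i. real i \<le> a} = (\<Sum>k\<in>{i. real i \<le> a} \<inter> {..n}. ?p k)"
    using q by (rule binom_prob_sum)
  also have "\<dots> \<le> (\<Sum>k\<in>{i. real i \<le> a} \<inter> {..n}. ?p k * exp (lam * (a - real k)))"
  proof (rule sum_mono)
    fix k assume "k \<in> {i. real i \<le> a} \<inter> {..n}"
    then have "exp (lam * (a - real k)) \<ge> 1" using lam by auto
    then show "?p k \<le> ?p k * exp (lam * (a - real k))"
      using mult_left_mono[of 1 "exp (lam * (a - real k))" "?p k"] by simp
  qed
  also have "\<dots> \<le> (\<Sum>k\<le>n. ?p k * exp (lam * (a - real k)))"
    by (rule sum_mono2) auto
  also have "\<dots> = exp (lam * a) * (\<Sum>k\<le>n. ?p k * exp ((- lam) * real k))"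
    by (simp add: sum_distrib_left algebra_simps exp_diff exp_minus field_simps)
  also have "\<dots> = exp (lam * a) * (1 - q + q * exp (- lam)) ^ n"
    by (subst binom_mgf[OF q]) (rule refl)
  also have "\<dots> \<le> exp (lam * a) * exp (q * (- lam) + 2 * q * (1 - q) * (- lam)^2) ^ n"
    using q lam by (intro mult_left_mono power_mono mgf_factor_bound) (auto intro: add_nonneg_nonneg)
  also have "\<dots> = exp (lam * a - lam * n * q + 2 * real n * q * (1 - q) * lam^2)"
    by (simp add: exp_of_nat_mult[symmetric] exp_add[symmetric] algebra_simps)
  finally show ?thesis .
qed

lemma choose_lam:
  fixes A v :: real
  assumes "A > 0" "v \<ge> 0"
  defines "lam \<equiv> sqrt (A / (2 * v + A))"
  shows "0 \<le> lam" "lam \<le> 1"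
    "- lam * (2 * sqrt (A * (2 * v + A))) + 2 * v * lam^2 \<le> - A"
proof -
  have S: "2 * v + A > 0" using assms by simp
  have nn: "0 \<le> A / (2 * v + A)" using S assms by simp
  show "0 \<le> lam" unfolding lam_def using nn by simp
  have "A / (2 * v + A) \<le> 1" using S assms by (simp add: field_simps)
  then show "lam \<le> 1" unfolding lam_def using nn by simp
  have l2: "lam^2 = A / (2 * v + A)" unfolding lam_def using nn by simp
  have "lam * sqrt (A * (2 * v + A)) = sqrt (A / (2 * v + A) * (A * (2 * v + A)))"
    unfolding lam_def by (simp only: real_sqrt_mult[symmetric])
  also have "A / (2 * v + A) * (A * (2 * v + A)) = A^2" using S by (simp add: field_simps power2_eq_square)
  finally have e: "lam * sqrt (A * (2 * v + A)) = A" using assms by simp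
  have "2 * v * lam^2 \<le> A" unfolding l2 using S assms by (simp add: field_simps)
  then show "- lam * (2 * sqrt (A * (2 * v + A))) + 2 * v * lam^2 \<le> - A" using e by simp
qed

lemma upper_tail_A:
  fixes q A :: real
  assumes q: "0 \<le> q" "q \<le> 1" and A: "A > 0"
  shows "measure_pmf.prob (binomial_pmf n q) {i. n * q + 2 * sqrt (A * (2 * (n * q * (1 - q)) + A)) \<le> real i}
     \<le> exp (- A)"
proof -
  define v where "v = n * q * (1 - q)"
  have v: "v \<ge> 0" using q by (simp add: v_def)
  define lam where "lam = sqrt (A / (2 * v + A))"
  note c = choose_lam[OF A v, folded lam_def]
  have "measure_pmf.prob (binomial_pmf n q) {i. n * q + 2 * sqrt (A * (2 * v + A)) \<le> real i}
    \<le> exp (- lam * (n * q + 2 * sqrt (A * (2 * v + A))) + lam * n * q + 2 * real n * q * (1 - q) * lam^2)"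
    by (rule upper_tail[OF q c(1,2)])
  also have "\<dots> \<le> exp (- A)" using c(3) by (simp add: v_def algebra_simps)
  finally show ?thesis by (simp add: v_def)
qed

lemma lower_tail_A:
  fixes q A :: real
  assumes q: "0 \<le> q" "q \<le> 1" and A: "A > 0"
  shows "measure_pmf.prob (binomial_pmf n q) {i. real i \<le> n * q - 2 * sqrt (A * (2 * (n * q * (1 - q)) + A))}
     \<le> exp (- A)"
proof -
  define v where "v = n * q * (1 - q)"
  have v: "v \<ge> 0" using q by (simp add: v_def)
  define lam where "lam = sqrt (A / (2 * v + A))"
  note c = choose_lam[OF A v, folded lam_def]
  have "measure_pmf.prob (binomial_pmf n q) {i. real i \<le> n * q - 2 * sqrt (A * (2 * v + A))}
    \<le> exp (lam * (n * q - 2 * sqrt (A * (2 * v + A))) - lam * n * q + 2 * real n * q * (1 - q) * lam^2)"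
    by (rule lower_tail[OF q c(1,2)])
  also have "\<dots> \<le> exp (- A)" using c(3) by (simp add: v_def algebra_simps)
  finally show ?thesis by (simp add: v_def)
qed



lemma greatest_int_ge:
  fixes P :: "int \<Rightarrow> bool"
  assumes "P c" "\<And>x. P x \<Longrightarrow> x \<le> B"
  shows "c \<le> (GREATEST x. P x)"
proof -
  define S where "S = {x. P x \<and> c \<le> x}"
  have "S \<subseteq> {c..B}" using assms(2) by (auto simp: S_def)
  then have fin: "finite S" using finite_atLeastAtMost_int finite_subset by blast
  have ne: "c \<in> S" using assms(1) by (simp add: S_def)
  define M where "M = Max S"
  have MS: "M \<in> S" unfolding M_def using fin ne by (intro Max_in) auto
  have cM: "c \<le> M" unfolding M_def using fin ne by simp
  have "(GREATEST x. P x) = M"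
  proof (rule Greatest_equality)
    show "P M" using MS by (simp add: S_def)
    fix y assume "P y"
    show "y \<le> M"
    proof (cases "c \<le> y")
      case True then have "y \<in> S" using \<open>P y\<close> by (simp add: S_def)
      then show ?thesis unfolding M_def using fin by simp
    next
      case False then show ?thesis using cM by simp
    qed
  qed
  then show ?thesis using cM by simp
qed

lemma least_int_le:
  fixes P :: "int \<Rightarrow> bool"
  assumes "P c" "\<And>x. P x \<Longrightarrow> B \<le> x"
  shows "(LEAST x. P x) \<le> c"
proof -
  define S where "S = {x. P x \<and> x \<le> c}"
  have "S \<subseteq> {B..c}" using assms(2) by (auto simp: S_def)
  then have fin: "finite S" using finite_atLeastAtMost_int finite_subset by blast
  have ne: "c \<in> S" using assms(1) by (simp add: S_def)
  define M where "M = Min S"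
  have MS: "M \<in> S" unfolding M_def using fin ne by (intro Min_in) auto
  have cM: "M \<le> c" unfolding M_def using fin ne by simp
  have "(LEAST x. P x) = M"
  proof (rule Least_equality)
    show "P M" using MS by (simp add: S_def)
    fix y assume "P y"
    show "M \<le> y"
    proof (cases "y \<le> c")
      case True then have "y \<in> S" using \<open>P y\<close> by (simp add: S_def)
      then show ?thesis unfolding M_def using fin by simp
    next
      case False then show ?thesis using cM by simp
    qed
  qed
  then show ?thesis using cM by simp
qed

lemma binom_prob_one:
  assumes "0 \<le> q" "q \<le> 1" "{..n} \<subseteq> B"
  shows "measure_pmf.prob (binomial_pmf n q) B = 1"
proof -
  have s: "set_pmf (binomial_pmf n q) \<subseteq> B"
    using assms by (auto simp: set_pmf_binomial_eq)
  have "measure_pmf.prob (binomial_pmf n q) B = measure_pmf.prob (binomial_pmf n q) (B \<inter> set_pmf (binomial_pmf n q))"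
    by (simp add: measure_Int_set_pmf)
  also have "B \<inter> set_pmf (binomial_pmf n q) = UNIV \<inter> set_pmf (binomial_pmf n q)" using s by auto
  also have "measure_pmf.prob (binomial_pmf n q) \<dots> = 1"
    by (simp only: measure_Int_set_pmf) simp
  finally show ?thesis .
qed

lemma thr_eq: "n \<ge> 1 \<Longrightarrow> real n powr (-(533/100)) = exp (- (533/100 * ln (real n)))"
  by (simp add: powr_def)

lemma thr_lt1: "n \<ge> 2 \<Longrightarrow> real n powr (-(533/100)) < 1"
  by (simp add: thr_eq)

lemma L_ge:
  assumes n: "n \<ge> 2" and q: "0 \<le> q" "q \<le> 1" and c: "lowTail n q c \<le> real n powr (-(533/100))"
  shows "c \<le> compL n q"
proof -
  have bnd: "x \<le> int n" if "lowTail n q x \<le> real n powr (-(533/100))" for x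
  proof (rule ccontr)
    assume "\<not> x \<le> int n"
    then have "lowTail n q x = 1" unfolding lowTail_def using q by (intro binom_prob_one) auto
    then show False using that thr_lt1[OF n] by simp
  qed
  show ?thesis unfolding compL_def using c
    by (auto intro: greatest_int_ge[where B = "int n"] bnd)
qed

lemma U_le:
  assumes n: "n \<ge> 2" and q: "0 \<le> q" "q \<le> 1" and c: "highTail n q c \<le> real n powr (-(533/100))"
  shows "compU n q \<le> c"
proof -
  have bnd: "0 \<le> x" if "highTail n q x \<le> real n powr (-(533/100))" for x
  proof (rule ccontr)
    assume "\<not> 0 \<le> x"
    then have "highTail n q x = 1" unfolding highTail_def using q by (intro binom_prob_one) auto
    then show False using that thr_lt1[OF n] by simp
  qed
  show ?thesis unfolding compU_def using c
    by (auto intro: least_int_le[where B = 0] bnd)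
qed

lemma ceil_aux: "\<lceil>y\<rceil> - 1 < int x \<Longrightarrow> y \<le> real x"
proof -
  assume "\<lceil>y\<rceil> - 1 < int x"
  then have "\<lceil>y\<rceil> \<le> int x" by simp
  then have "real_of_int \<lceil>y\<rceil> \<le> real_of_int (int x)" by (simp only: of_int_le_iff)
  then have "real_of_int \<lceil>y\<rceil> \<le> real x" by simp
  moreover have "y \<le> real_of_int \<lceil>y\<rceil>" by (rule le_of_int_ceiling)
  ultimately show ?thesis by linarith
qed

definition Dlt :: "nat \<Rightarrow> real \<Rightarrow> real" where
  "Dlt n q = 2 * sqrt ((533/100 * ln (real n)) * (2 * (real n * q * (1 - q)) + 533/100 * ln (real n)))"

lemma compL_lower:
  assumes n: "n \<ge> 2" and q: "0 \<le> q" "q \<le> 1"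
  shows "real n * q - Dlt n q < real_of_int (compL n q)"
proof -
  define A where "A = 533/100 * ln (real n)"
  have A: "A > 0" using n by (simp add: A_def)
  define c where "c = \<lfloor>real n * q - Dlt n q\<rfloor> + 1"
  have "lowTail n q c \<le> measure_pmf.prob (binomial_pmf n q) {i. real i \<le> real n * q - Dlt n q}"
    unfolding lowTail_def c_def
    by (intro measure_pmf.finite_measure_mono) (auto simp: le_floor_iff)
  also have "\<dots> \<le> exp (- A)" unfolding Dlt_def A_def[symmetric] by (rule lower_tail_A[OF q A])
  also have "\<dots> = real n powr (-(533/100))" using n by (simp add: thr_eq A_def)
  finally have "c \<le> compL n q" by (rule L_ge[OF n q])
  moreover have "real n * q - Dlt n q < c" unfolding c_def by linarith
  ultimately show ?thesis by linarith
qed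

lemma compU_upper:
  assumes n: "n \<ge> 2" and q: "0 \<le> q" "q \<le> 1"
  shows "real_of_int (compU n q) < real n * q + Dlt n q"
proof -
  define A where "A = 533/100 * ln (real n)"
  have A: "A > 0" using n by (simp add: A_def)
  define c where "c = \<lceil>real n * q + Dlt n q\<rceil> - 1"
  have "highTail n q c \<le> measure_pmf.prob (binomial_pmf n q) {i. real n * q + Dlt n q \<le> real i}"
    unfolding highTail_def c_def
    by (intro measure_pmf.finite_measure_mono) (auto intro: ceil_aux)
  also have "\<dots> \<le> exp (- A)" unfolding Dlt_def A_def[symmetric] by (rule upper_tail_A[OF q A])
  also have "\<dots> = real n powr (-(533/100))" using n by (simp add: thr_eq A_def)
  finally have "compU n q \<le> c" by (rule U_le[OF n q])
  moreover have "c < real n * q + Dlt n q" unfolding c_def by linarith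
  ultimately show ?thesis by linarith
qed



lemma sqrt_le_from_sq: "0 \<le> y \<Longrightarrow> x \<le> y^2 \<Longrightarrow> sqrt x \<le> y"
  by (metis abs_of_nonneg real_sqrt_abs real_sqrt_le_mono)

lemma numeric:
  fixes L V X s Dt Dk m :: real
  assumes L: "L \<ge> 1" and VX: "X \<le> 2 * V" "V \<le> X" and XL: "X \<ge> 8200 * L"
    and Dt: "Dt = 2 * sqrt ((533/100 * L) * (2 * V + 533/100 * L))"
    and Dk: "Dk = 2 * sqrt ((533/100 * L) * (2 * s + 533/100 * L))"
    and s: "0 \<le> s" "s \<le> V + Dt + Dk + 2"
    and m: "0 \<le> m" "m \<le> sqrt (X / L) / 264 + 1"
  shows "Dt \<le> 11/100 * V" "(m + 3) * (Dk + m + 2) \<le> V - Dt - 1" "Dk + m + 2 \<le> V" "V \<ge> 4100"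
proof -
  define A where "A = 533/100 * L"
  have A0: "A \<ge> 0" using L by (simp add: A_def)
  have VL: "V \<ge> 4100 * L" using VX XL by linarith
  have V0: "V > 0" using VL L by linarith
  show V4: "V \<ge> 4100" using VL L by linarith
  have AV: "A \<le> 13/10000 * V" using VL by (simp add: A_def)
  define u where "u = sqrt (V / L)"
  define w where "w = sqrt (V * L)"
  have u0: "u \<ge> 0" "w \<ge> 0" using V0 L by (auto simp: u_def w_def)
  have uw: "u * w = V"
  proof -
    have "u * w = sqrt (V / L * (V * L))" unfolding u_def w_def by (simp only: real_sqrt_mult)
    also have "V / L * (V * L) = V^2" using L by (simp add: power2_eq_square)
    finally show ?thesis using V0 by simp
  qed
  have u2: "u^2 = V / L" using V0 L by (simp add: u_def)
  have w2: "w^2 = V * L" using V0 L by (simp add: w_def)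
  have "4100 \<le> V / L" using VL L by (simp add: le_divide_eq mult.commute)
  then have "u^2 \<ge> 4100" using u2 by simp
  then have u64: "u \<ge> 64"
  proof -
    assume a: "u^2 \<ge> 4100"
    show "u \<ge> 64"
    proof (rule ccontr)
      assume "\<not> u \<ge> 64"
      then have "u^2 < 64^2" using u0 by (intro power_strict_mono) auto
      then show False using a by simp
    qed
  qed
  have uV: "u^2 \<le> V" unfolding u2 using L V0 by (simp add: divide_le_eq)
  have uV64: "u \<le> V / 64"
  proof -
    have "64 * u \<le> u * u" using u64 u0 by (intro mult_right_mono) auto
    then show ?thesis using uV by (simp add: power2_eq_square field_simps)
  qed
  have wV64: "w \<le> V / 64"
  proof -
    have "64 * w \<le> u * w" using u64 u0 by (intro mult_right_mono) auto
    then show ?thesis using uw by simp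
  qed
  have Dtw: "Dt \<le> 656/100 * w"
  proof -
    have "A * (2 * V + A) \<le> A * (2 * V + 13/10000 * V)" using A0 AV by (intro mult_left_mono) auto
    also have "\<dots> \<le> (328/100)^2 * (V * L)" unfolding A_def using V0 L by (simp add: algebra_simps power2_eq_square)
    also have "\<dots> = (328/100 * w)^2" unfolding power_mult_distrib w2 by (rule refl)
    finally have "sqrt (A * (2 * V + A)) \<le> 328/100 * w"
      using u0 by (intro sqrt_le_from_sq) auto
    then show ?thesis unfolding Dt A_def[symmetric] by simp
  qed
  then show Dt11: "Dt \<le> 11/100 * V" using wV64 V0 by linarith
  have s125: "s \<le> 125/100 * V"
  proof (rule ccontr)
    assume "\<not> ?thesis"
    then have sV: "s > 125/100 * V" by simp
    have As: "A \<le> 105/100000 * s" using AV sV V0 by linarith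
    have "A * (2 * s + A) \<le> (105/100000 * s) * (2 * s + 105/100000 * s)"
      using As A0 s by (intro mult_mono) auto
    also have "\<dots> \<le> (47/1000 * s)^2" by (simp add: power2_eq_square algebra_simps)
    finally have "sqrt (A * (2 * s + A)) \<le> 47/1000 * s" using s by (intro sqrt_le_from_sq) auto
    then have "Dk \<le> 94/1000 * s" unfolding Dk A_def[symmetric] by simp
    then show False using s sV Dtw wV64 V4 by linarith
  qed
  have Dkw: "Dk \<le> 733/100 * w"
  proof -
    have "A * (2 * s + A) \<le> A * (2 * (125/100 * V) + 13/10000 * V)" using A0 AV s125 by (intro mult_left_mono) auto
    also have "\<dots> \<le> (3661/1000)^2 * (V * L)" unfolding A_def using V0 L by (simp add: algebra_simps power2_eq_square)
    also have "\<dots> = (3661/1000 * w)^2" unfolding power_mult_distrib w2 by (rule refl)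
    finally have "sqrt (A * (2 * s + A)) \<le> 3661/1000 * w"
      using u0 by (intro sqrt_le_from_sq) auto
    then show ?thesis unfolding Dk A_def[symmetric] using u0 by linarith
  qed
  have mu: "m \<le> 536/100000 * u + 1"
  proof -
    have "sqrt (X / L) \<le> sqrt (2 * (V / L))" using VX L by (intro real_sqrt_le_mono) (simp add: divide_right_mono)
    also have "\<dots> = sqrt 2 * u" unfolding u_def by (rule real_sqrt_mult)
    also have "\<dots> \<le> 1415/1000 * u" using u0
      by (intro mult_right_mono sqrt_le_from_sq) (auto simp: power2_eq_square)
    finally show ?thesis using m u0 by linarith
  qed
  have Dk0: "Dk \<ge> 0" unfolding Dk using L s by simp
  have P: "m + 3 \<le> 536/100000 * u + 4" using mu by linarith
  have Q: "Dk + m + 2 \<le> 733/100 * w + 536/100000 * u + 3" using mu Dkw by linarith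
  have "(m + 3) * (Dk + m + 2) \<le> (536/100000 * u + 4) * (733/100 * w + 536/100000 * u + 3)"
    using P Q m s Dk0 by (intro mult_mono) auto
  also have "\<dots> = (536/100000 * 733/100) * (u * w) + 4 * 733/100 * w
      + 287296/10000000000 * u^2 + (3 * 536/100000 + 4 * 536/100000) * u + 12"
    by (simp add: algebra_simps power2_eq_square)
  also have "\<dots> \<le> V - Dt - 1" unfolding uw using uV uV64 wV64 Dt11 V4 u0 by (simp; linarith)
  finally show "(m + 3) * (Dk + m + 2) \<le> V - Dt - 1" .
  show "Dk + m + 2 \<le> V" using Q wV64 uV64 V4 by linarith
qed



lemma pmf_rec:
  assumes q: "0 \<le> q" "q \<le> 1" and j: "j < n"
  shows "pmf (binomial_pmf n q) (Suc j) * (real j + 1) * (1 - q)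
       = pmf (binomial_pmf n q) j * (real n - real j) * q"
proof -
  have c: "real (Suc j) * real (n choose Suc j) = (real n - real j) * real (n choose j)"
  proof -
    have "Suc j * (n choose Suc j) = (n - j) * (n choose j)"
      using binomial_absorption[of j n] binomial_absorb_comp[of n j] by simp
    then have "real (Suc j * (n choose Suc j)) = real ((n - j) * (n choose j))" by simp
    then show ?thesis using j by (simp add: of_nat_diff algebra_simps)
  qed
  have e: "n - j = Suc (n - Suc j)" using j by simp
  have "pmf (binomial_pmf n q) (Suc j) * (real j + 1) * (1 - q)
      = (real (Suc j) * real (n choose Suc j)) * q ^ Suc j * (1 - q) ^ Suc (n - Suc j)"
    using q by (simp add: algebra_simps)
  also have "\<dots> = ((real n - real j) * real (n choose j)) * q ^ Suc j * (1 - q) ^ (n - j)"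
    by (simp only: c e)
  also have "\<dots> = pmf (binomial_pmf n q) j * (real n - real j) * q"
    using q by (simp add: algebra_simps)
  finally show ?thesis .
qed

lemma pmf_ratio:
  fixes N :: real
  assumes q: "0 < q" "q < 1" and j: "j < n" and N: "N \<ge> 0"
    and cond: "(N + 1) * (real j + 1 - real n * q) \<le> (real j + 1) * (1 - q)"
  shows "N / (N + 1) * pmf (binomial_pmf n q) j \<le> pmf (binomial_pmf n q) (Suc j)"
proof -
  let ?b = "pmf (binomial_pmf n q)"
  have r: "?b (Suc j) * ((real j + 1) * (1 - q)) = ?b j * ((real n - real j) * q)"
    using pmf_rec[of q j n] q j by (simp add: algebra_simps)
  have d: "(real j + 1) * (1 - q) > 0" using q by simp
  have key: "N * ((real j + 1) * (1 - q)) \<le> (N + 1) * ((real n - real j) * q)"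
  proof -
    have "(N + 1) * ((real n - real j) * q) - N * ((real j + 1) * (1 - q))
        = ((real j + 1) * (1 - q) - (N + 1) * (real j + 1 - real n * q)) + (N + 1) * q"
      by (simp add: algebra_simps)
    moreover have "(N + 1) * q \<ge> 0" using N q by simp
    ultimately show ?thesis using cond by linarith
  qed
  have "N / (N + 1) * ?b j * ((real j + 1) * (1 - q)) = ?b j * (N * ((real j + 1) * (1 - q))) / (N + 1)"
    by (simp add: field_simps)
  also have "\<dots> \<le> ?b j * ((N + 1) * ((real n - real j) * q)) / (N + 1)"
    using key N by (intro divide_right_mono mult_left_mono) auto
  also have "\<dots> = ?b j * ((real n - real j) * q)" using N by (simp add: field_simps)
  also have "\<dots> = ?b (Suc j) * ((real j + 1) * (1 - q))" using r by simp
  finally show ?thesis using d by (simp only: mult_le_cancel_right_pos)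
qed

lemma chain:
  fixes b :: "nat \<Rightarrow> real" and rho :: real
  assumes rho: "0 \<le> rho" and step: "\<And>j. a \<le> j \<Longrightarrow> j < a + K \<Longrightarrow> rho * b j \<le> b (Suc j)"
    and b0: "b a \<ge> 0"
  shows "i \<le> K \<Longrightarrow> rho ^ i * b a \<le> b (a + i)"
proof (induction i)
  case 0 then show ?case by simp
next
  case (Suc i)
  then have "rho ^ i * b a \<le> b (a + i)" by simp
  then have "rho * (rho ^ i * b a) \<le> rho * b (a + i)" using rho by (intro mult_left_mono) auto
  also have "\<dots> \<le> b (Suc (a + i))" using step[of "a + i"] Suc.prems by simp
  finally show ?case by (simp add: algebra_simps)
qed

lemma rho_pow:
  fixes N :: nat
  assumes "N \<ge> 1"
  shows "exp (-1) \<le> (real N / (real N + 1)) ^ N"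
proof -
  have "(1 + 1 / real N) ^ N \<le> exp (1 / real N) ^ N"
    by (intro power_mono exp_ge_add_one_self) (simp add: add_nonneg_nonneg)
  also have "\<dots> = exp 1" using assms by (simp add: exp_of_nat_mult[symmetric])
  finally have a: "(1 + 1 / real N) ^ N \<le> exp 1" .
  have b: "real N / (real N + 1) = inverse (1 + 1 / real N)" using assms by (simp add: field_simps)
  have pos: "(1 + 1 / real N) ^ N > 0" by (intro zero_less_power) (auto intro: add_pos_nonneg)
  have "exp (-1) = inverse (exp (1::real))" by (rule exp_minus)
  also have "\<dots> \<le> inverse ((1 + 1 / real N) ^ N)" using a pos by (intro le_imp_inverse_le) auto
  also have "\<dots> = (real N / (real N + 1)) ^ N" by (simp add: b power_inverse)
  finally show ?thesis .
qed



theorem mainTheorem9: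
  fixes n :: nat and p :: "nat \<Rightarrow> real" and t k l :: nat and h :: int
  assumes "n \<ge> 10^6"
    and "\<forall>j\<le>n. 0 \<le> p j \<and> p j \<le> 1"
    and "t \<le> n" and "\<forall>j\<le>n. p j \<le> p t"
    and "xi n (p t) \<ge> 8200 * ln (real n)"
    and "l \<le> 2"
    and "k \<le> n"
    and "h \<in> comfortZone n (p t)"
    and "h - 2 \<in> comfortZone n (p k)"
  shows "measure_pmf.prob (binomial_pmf n (p k)) {i. int i = h - int l}
         \<le> 264 * exp 1 * sqrt (ln (real n) / xi n (p t))
           * measure_pmf.prob (binomial_pmf n (p k)) {i. int i > h}"
proof -
  note nbig = assms(1)
  define qt where "qt = p t"
  define q where "q = p k"
  define L where "L = ln (real n)"
  define X where "X = xi n qt"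
  define V where "V = real n * qt * (1 - qt)"
  define s where "s = real n * q * (1 - q)"
  define Dt where "Dt = Dlt n qt"
  define Dk where "Dk = Dlt n q"
  let ?b = "pmf (binomial_pmf n q)"
  have n2: "n \<ge> 2" using nbig by simp
  have qt01: "0 \<le> qt" "qt \<le> 1" using assms(2,3) by (auto simp: qt_def)
  have q01: "0 \<le> q" "q \<le> 1" using assms(2,7) by (auto simp: q_def)
  have qqt: "q \<le> qt" using assms(4,7) by (auto simp: q_def qt_def)
  have L1: "L \<ge> 1"
  proof -
    have "exp 1 \<le> (3::real)" using exp_le by simp
    also have "\<dots> \<le> real n" using n2 nbig by simp
    finally have "ln (exp 1) \<le> ln (real n)" using n2 by (subst ln_le_cancel_iff) auto
    then show ?thesis by (simp add: L_def)
  qed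
  have XL: "X \<ge> 8200 * L" using assms(5) by (simp add: X_def L_def qt_def)
  have VX: "X \<le> 2 * V" "V \<le> X"
  proof -
    have nn: "real n \<ge> 0" by simp
    show "X \<le> 2 * V" "V \<le> X"
    proof -
      consider "qt \<le> 1/2" | "qt > 1/2" by linarith
      then have "X \<le> 2 * V \<and> V \<le> X"
      proof cases
        case 1
        have "(2 * qt) * real n \<le> 1 * real n" using 1 nn by (intro mult_right_mono) auto
        then have X: "X = qt * real n" unfolding X_def xi_def by (intro min_absorb1) auto
        have "qt * real n * 1 \<le> qt * real n * (2 * (1 - qt))" using 1 qt01 nn by (intro mult_left_mono) auto
        moreover have "qt * real n * (1 - qt) \<le> qt * real n * 1" using qt01 nn by (intro mult_left_mono) auto
        ultimately show ?thesis unfolding X V_def by (simp add: algebra_simps)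
      next
        case 2
        have "1 * real n \<le> (2 * qt) * real n" using 2 nn by (intro mult_right_mono) auto
        then have X: "X = real n - qt * real n" unfolding X_def xi_def by (intro min_absorb2) auto
        have "(1 - qt) * real n * 1 \<le> (1 - qt) * real n * (2 * qt)" using 2 qt01 nn by (intro mult_left_mono) auto
        moreover have "(1 - qt) * real n * qt \<le> (1 - qt) * real n * 1" using qt01 nn by (intro mult_left_mono) auto
        ultimately show ?thesis unfolding X V_def by (simp add: algebra_simps)
      qed
      then show "X \<le> 2 * V" "V \<le> X" by auto
    qed
  qed
  have hL: "real n * qt - Dt < real_of_int h"
  proof -
    have "compL n qt \<le> h" using assms(8) by (simp add: comfortZone_def qt_def)
    then show ?thesis using compL_lower[OF n2 qt01] unfolding Dt_def by linarith
  qed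
  have hU: "real_of_int h - 2 < real n * q + Dk"
  proof -
    have "h - 2 \<le> compU n q" using assms(9) by (simp add: comfortZone_def q_def)
    then show ?thesis using compU_upper[OF n2 q01] unfolding Dk_def by linarith
  qed
  have s0: "s \<ge> 0" using q01 by (simp add: s_def)
  have sV: "s \<le> V + Dt + Dk + 2"
  proof -
    have "q * (1 - q) \<le> qt * (1 - qt) + (qt - q)"
    proof -
      have "qt * (1 - qt) - q * (1 - q) = (qt - q) * (1 - qt - q)" by (simp add: algebra_simps)
      also have "\<dots> \<ge> (qt - q) * (-1)" using qqt q01 qt01 by (intro mult_left_mono) auto
      finally show ?thesis by simp
    qed
    then have "real n * (q * (1 - q)) \<le> real n * (qt * (1 - qt) + (qt - q))" by (intro mult_left_mono) auto
    then have "s \<le> V + real n * qt - real n * q" by (simp add: s_def V_def algebra_simps)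
    then show ?thesis using hL hU by linarith
  qed
  define m where "m = nat \<lceil>sqrt (X / L) / 264\<rceil>"
  have XLpos: "X / L > 0" using XL L1 by simp
  have m_ge: "real m \<ge> sqrt (X / L) / 264"
  proof -
    have "sqrt (X / L) / 264 \<ge> 0" using XLpos by simp
    then have c0: "\<lceil>sqrt (X / L) / 264\<rceil> \<ge> 0" using ceiling_mono[of 0 "sqrt (X / L) / 264"] by simp
    have "real m = real_of_int \<lceil>sqrt (X / L) / 264\<rceil>" unfolding m_def using c0 by simp
    then show ?thesis using le_of_int_ceiling[of "sqrt (X / L) / 264"] by linarith
  qed
  have m_le: "real m \<le> sqrt (X / L) / 264 + 1" unfolding m_def
  proof -
    have "sqrt (X / L) / 264 \<ge> 0" using XLpos by simp
    then have c0: "\<lceil>sqrt (X / L) / 264\<rceil> \<ge> 0" using ceiling_mono[of 0 "sqrt (X / L) / 264"] by simp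
    have "real (nat \<lceil>sqrt (X / L) / 264\<rceil>) = real_of_int \<lceil>sqrt (X / L) / 264\<rceil>" using c0 by simp
    then show "real (nat \<lceil>sqrt (X / L) / 264\<rceil>) \<le> sqrt (X / L) / 264 + 1" by linarith
  qed
  have m1: "m \<ge> 1"
  proof -
    have "sqrt (X / L) / 264 > 0" using XLpos by simp
    then show ?thesis using m_ge by linarith
  qed
  have Dt_eq: "Dt = 2 * sqrt ((533/100 * L) * (2 * V + 533/100 * L))" by (simp add: Dt_def Dlt_def L_def V_def)
  have Dk_eq: "Dk = 2 * sqrt ((533/100 * L) * (2 * s + 533/100 * L))" by (simp add: Dk_def Dlt_def L_def s_def)
  have m0: "real m \<ge> 0" by simp
  note N = numeric[OF L1 VX XL Dt_eq Dk_eq s0 sV m0 m_le]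
  have Dk0: "Dk \<ge> 0" using Dk_eq L1 s0 by simp
  have Dt0: "Dt \<ge> 0" using Dt_eq L1 VX by (simp add: mult_nonneg_nonneg)
  have nqtV: "real n * qt \<ge> V" unfolding V_def using qt01 by (simp add: mult_left_le)
  have hbig: "real_of_int h > 3" using hL N(1,4) nqtV by linarith
  have Dk4: "Dk + real m + 2 \<le> V / 4"
  proof -
    have "4 * (Dk + real m + 2) \<le> (real m + 3) * (Dk + real m + 2)"
      using m1 Dk0 by (intro mult_right_mono) auto
    then have "4 * (Dk + real m + 2) \<le> V - Dt - 1" using N(2) by (rule order_trans)
    then show ?thesis using Dt0 by (simp add: field_simps)
  qed
  have qpos: "q > 0"
  proof -
    have "real n * q > 0" using hU hbig hL N(1) nqtV Dk4 by linarith
    then show ?thesis using q01 by (simp add: zero_less_mult_iff)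
  qed
  have qlt1: "q < 1"
  proof -
    have "V > 0" using N(4) by simp
    then have "qt < 1" unfolding V_def using qt01 by (cases "qt = 1") auto
    then show ?thesis using qqt by simp
  qed
  have n1qt: "real n - real n * q \<ge> V"
  proof -
    have "real n * (1 - qt) \<le> real n * (1 - q)" using qqt by (intro mult_left_mono) auto
    moreover have "V \<le> real n * (1 - qt)" unfolding V_def using qt01
      by (simp add: mult.assoc mult_left_le_one_le mult_left_mono)
    ultimately show ?thesis by (simp add: algebra_simps)
  qed
  define a where "a = nat (h - int l)"
  have a_eq: "int a = h - int l" using hbig assms(6) unfolding a_def by simp
  define rho where "rho = real (m + 2) / (real (m + 2) + 1)"
  have rho0: "0 \<le> rho" "rho \<le> 1" by (auto simp: rho_def)
  have step: "rho * ?b j \<le> ?b (Suc j)" if j: "a \<le> j" "j < a + (m + l)" for j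
  proof -
    have jlo: "real j \<ge> real_of_int h - 2" using j(1) a_eq assms(6) by linarith
    have jhi: "real j + 1 \<le> real_of_int h + real m" using j(2) a_eq by linarith
    have jn: "j < n" using jhi hU Dk4 n1qt N(4) by linarith
    have "real (m + 2) + 1 = real m + 3" by simp
    have "(real m + 3) * (real j + 1 - real n * q) \<le> (real m + 3) * (Dk + real m + 2)"
      using jhi hU by (intro mult_left_mono) auto
    also have "\<dots> \<le> V - Dt - 1" by (rule N(2))
    also have "\<dots> \<le> (real n * qt - Dt - 1) * (1 - qt)"
    proof -
      have "(Dt + 1) * (1 - qt) \<le> (Dt + 1) * 1" using Dt0 qt01 by (intro mult_left_mono) auto
      then show ?thesis unfolding V_def by (simp add: algebra_simps)
    qed
    also have "\<dots> \<le> (real j + 1) * (1 - q)"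
      using hL jlo hbig qqt qt01 by (intro mult_mono) auto
    finally have c: "(real (m + 2) + 1) * (real j + 1 - real n * q) \<le> (real j + 1) * (1 - q)" by (simp add: add.commute)
    show ?thesis unfolding rho_def using pmf_ratio[OF qpos qlt1 jn _ c] by simp
  qed
  have b0: "?b a \<ge> 0" by simp
  have ch: "rho ^ i * ?b a \<le> ?b (a + i)" if "i \<le> m + l" for i
    using chain[of rho a "m + l" ?b, OF rho0(1) step b0 that] by simp
  have rp: "exp (-1) \<le> rho ^ (m + 2)" unfolding rho_def by (rule rho_pow) simp
  have each: "exp (-1) * ?b a \<le> ?b (a + l + i)" if i: "1 \<le> i" "i \<le> m" for i
  proof -
    have "exp (-1) * ?b a \<le> rho ^ (m + 2) * ?b a" using rp b0 by (intro mult_right_mono) auto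
    also have "\<dots> \<le> rho ^ (l + i) * ?b a"
      using rho0 b0 i assms(6) by (intro mult_right_mono power_decreasing) auto
    also have "\<dots> \<le> ?b (a + (l + i))" using ch[of "l + i"] i by simp
    finally show ?thesis by (simp add: add.assoc)
  qed
  have hA: "int (a + l) = h" using a_eq by simp
  have "real m * (exp (-1) * ?b a) = (\<Sum>i\<in>{1..m}. exp (-1) * ?b a)" by simp
  also have "\<dots> \<le> (\<Sum>i\<in>{1..m}. ?b (a + l + i))" by (intro sum_mono each) auto
  also have "\<dots> = (\<Sum>j\<in>(\<lambda>i. a + l + i) ` {1..m}. ?b j)" by (subst sum.reindex) (auto simp: inj_on_def)
  also have "\<dots> \<le> (\<Sum>j\<in>{i. int i > h} \<inter> {..n}. ?b j)"
  proof (rule sum_mono2)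
    show "(\<lambda>i. a + l + i) ` {1..m} \<subseteq> {i. int i > h} \<inter> {..n}"
    proof
      fix x assume "x \<in> (\<lambda>i. a + l + i) ` {1..m}"
      then obtain i where i0: "i \<in> {1..m}" "x = a + l + i" by (rule imageE) simp
      then have i: "1 \<le> i" "i \<le> m" "x = a + l + i" by auto
      have "real x \<le> real_of_int h + real m" using i hA by simp
      then have "x < n" using hU Dk4 n1qt N(4) by linarith
      moreover have "int x > h" using i hA by simp
      ultimately show "x \<in> {i. int i > h} \<inter> {..n}" by simp
    qed
  qed auto
  also have "\<dots> = measure_pmf.prob (binomial_pmf n q) {i. int i > h}"
    using q01 by (simp add: binom_prob_sum)
  finally have low: "real m * exp (-1) * ?b a \<le> measure_pmf.prob (binomial_pmf n q) {i. int i > h}"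
    by (simp add: mult.assoc)
  have lhs: "measure_pmf.prob (binomial_pmf n q) {i. int i = h - int l} = ?b a"
  proof -
    have "{i. int i = h - int l} = {a}" using a_eq by auto
    then show ?thesis by (simp add: measure_pmf_single)
  qed
  define P where "P = measure_pmf.prob (binomial_pmf n q) {i. int i > h}"
  have "?b a \<le> exp 1 / real m * P"
  proof -
    have "real m * ?b a \<le> exp 1 * P" using low unfolding P_def
      by (simp add: exp_minus field_simps)
    then show ?thesis using m1 by (simp add: field_simps)
  qed
  also have "\<dots> \<le> exp 1 * (264 * sqrt (L / X)) * P"
  proof -
    have "1 / real m \<le> 264 * sqrt (L / X)"
    proof -
      have "sqrt (X / L) * sqrt (L / X) = 1" using XLpos XL L1
        by (simp add: real_sqrt_mult[symmetric])
      have "1 / real m \<le> 1 / (sqrt (X / L) / 264)"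
      proof (rule divide_left_mono)
        have sq: "sqrt (X / L) > 0" using XLpos by simp
        show "sqrt (X / L) / 264 \<le> real m" by (rule m_ge)
        show "0 < real m * (sqrt (X / L) / 264)" using sq m1 by simp
      qed simp
      also have "\<dots> = 264 * sqrt (L / X)" by (simp add: real_sqrt_divide)
      finally show ?thesis .
    qed
    then have "exp 1 * (1 / real m) * P \<le> exp 1 * (264 * sqrt (L / X)) * P"
      unfolding P_def by (intro mult_right_mono mult_left_mono) auto
    then show ?thesis by simp
  qed
  finally have fin: "?b a \<le> exp 1 * (264 * sqrt (L / X)) * P" .
  have "measure_pmf.prob (binomial_pmf n q) {i. int i = h - int l} \<le> 264 * exp 1 * sqrt (L / X) * P"
    using fin unfolding lhs by (simp add: mult_ac)
  then show ?thesis unfolding P_def q_def qt_def L_def X_def by simp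
qed

end
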